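(* Let $r\le n$ and let $A$ be an $r\times n$ matrix over a local ring $(R,\mathfrak{m})$. If all $r\times r$ minors of $A$ vanish and the corank of $A\pmod{\mathfrak{m}}$ is $1$, then the left kernel of $A$ is a free $R$-module of rank $1$.
   Context: The corank of an $r\times n$ matrix (with $r\le n$) over the residue field means $r$ minus its rank; the left kernel of $A$ is $\{v\in R^r: v^TA=0\}$. *)

theory Defs
  imports "Jordan_Normal_Form.Determinant" "Jordan_Normal_Form.DL_Submatrix"
begin

definition is_ideal :: "'a::comm_ring_1 set \<Rightarrow> bool" where
  "is_ideal I \<longleftrightarrow> 0 \<in> I \<and> (\<forall>x\<in>I. \<forall>y\<in>I. x + y \<in> I) \<and> (\<forall>a. \<forall>x\<in>I. a * x \<in> I)"

definition maximal_ideal :: "'a::comm_ring_1 set \<Rightarrow> bool" where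
  "maximal_ideal I \<longleftrightarrow> is_ideal I \<and> I \<noteq> UNIV \<and>
     (\<forall>J. is_ideal J \<and> I \<subseteq> J \<longrightarrow> J = I \<or> J = UNIV)"

definition local_ring :: "'a::comm_ring_1 itself \<Rightarrow> bool" where
  "local_ring _ \<longleftrightarrow> (\<exists>!m::'a set. maximal_ideal m)"

text \<open>Rank of the reduction of A modulo m, over the residue field R/m, as the maximal
  number of rows of A whose reductions are linearly independent over R/m.
  A linear relation over R/m among reduced rows with index set S lifts to coefficients
  c_i in R with sum_i c_i * row_i in m^n; nontriviality means some c_i is not in m.\<close>
definition rows_indep_mod :: "'a::comm_ring_1 set \<Rightarrow> 'a mat \<Rightarrow> nat set \<Rightarrow> bool" where
  "rows_indep_mod m A S \<longleftrightarrow>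
     (\<forall>c::nat \<Rightarrow> 'a. (\<forall>j<dim_col A. (\<Sum>i\<in>S. c i * A $$ (i, j)) \<in> m) \<longrightarrow> (\<forall>i\<in>S. c i \<in> m))"

definition rank_mod :: "'a::comm_ring_1 set \<Rightarrow> 'a mat \<Rightarrow> nat" where
  "rank_mod m A = Max {card S | S. S \<subseteq> {..<dim_row A} \<and> rows_indep_mod m A S}"

definition corank_mod :: "'a::comm_ring_1 set \<Rightarrow> 'a mat \<Rightarrow> nat" where
  "corank_mod m A = dim_row A - rank_mod m A"

definition left_kernel :: "'a::comm_ring_1 mat \<Rightarrow> 'a vec set" where
  "left_kernel A = {v \<in> carrier_vec (dim_row A). transpose_mat A *\<^sub>v v = 0\<^sub>v (dim_col A)}"

definition free_rank_one :: "'a::comm_ring_1 vec set \<Rightarrow> bool" where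
  "free_rank_one K \<longleftrightarrow> (\<exists>w\<in>K. \<forall>v\<in>K. \<exists>!c. v = c \<cdot>\<^sub>v w)"

end

theory Submission imports Defs "HOL-Combinatorics.Permutations" begin

lemma mi_ideal: "maximal_ideal m \<Longrightarrow> is_ideal m"
  by (simp add: maximal_ideal_def)

lemma mi_one: "maximal_ideal (m::'a::comm_ring_1 set) \<Longrightarrow> 1 \<notin> m"
proof
  assume a: "maximal_ideal m" "1 \<in> m"
  hence "\<forall>x. x \<in> m" using a unfolding maximal_ideal_def is_ideal_def by (metis mult.right_neutral)
  thus False using a unfolding maximal_ideal_def by auto
qed

lemma mi_mult: "maximal_ideal m \<Longrightarrow> x \<in> m \<Longrightarrow> a * x \<in> m"
  unfolding maximal_ideal_def is_ideal_def by auto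

lemma mi_add: "maximal_ideal m \<Longrightarrow> x \<in> m \<Longrightarrow> y \<in> m \<Longrightarrow> x + y \<in> m"
  unfolding maximal_ideal_def is_ideal_def by auto

lemma mi_zero: "maximal_ideal m \<Longrightarrow> 0 \<in> m"
  unfolding maximal_ideal_def is_ideal_def by auto

lemma mi_sum: "maximal_ideal m \<Longrightarrow> (\<And>i. i \<in> S \<Longrightarrow> f i \<in> m) \<Longrightarrow> sum f S \<in> m"
  by (induction S rule: infinite_finite_induct) (auto simp: mi_zero mi_add)

lemma local_unit:
  fixes m :: "'a::comm_ring_1 set"
  assumes loc: "local_ring TYPE('a)" and mm: "maximal_ideal m" and x: "x \<notin> m"
  shows "\<exists>y. x * y = 1"
proof (rule ccontr)
  assume nu: "\<not> (\<exists>y. x * y = 1)"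
  define I0 where "I0 = {a * x | a. True}"
  define F where "F = {I. is_ideal I \<and> I0 \<subseteq> I \<and> (1::'a) \<notin> I}"
  have I0F: "I0 \<in> F" unfolding F_def I0_def is_ideal_def mem_Collect_eq[of _ "\<lambda>I. _ I \<and> _ I"]
  proof (intro conjI ballI allI)
    show "0 \<in> {a * x | a. True}" by (metis (mono_tags, lifting) CollectI mult_zero_left)
    show "{a * x | a. True} \<subseteq> {a * x | a. True}" by simp
    show "1 \<notin> {a * x | a. True}" using nu by (auto simp: mult.commute)
  next
    fix y z assume "y \<in> {a * x | a. True}" "z \<in> {a * x | a. True}"
    then obtain a b where "y = a * x" "z = b * x" by auto
    hence "y + z = (a + b) * x" by (simp add: distrib_right)
    thus "y + z \<in> {a * x | a. True}" by auto
  next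
    fix c y assume "y \<in> {a * x | a. True}"
    then obtain a where "y = a * x" by auto
    hence "c * y = (c * a) * x" by (simp add: mult.assoc)
    thus "c * y \<in> {a * x | a. True}" by auto
  qed
  have "\<exists>M\<in>F. \<forall>X\<in>F. M \<subseteq> X \<longrightarrow> X = M"
  proof (rule Zorn_Lemma2, intro ballI)
    fix C assume C: "C \<in> chains F"
    hence CF: "C \<subseteq> F" and ch: "\<forall>A\<in>C. \<forall>B\<in>C. A \<subseteq> B \<or> B \<subseteq> A"
      unfolding chains_def chain_subset_def by auto
    show "\<exists>U\<in>F. \<forall>X\<in>C. X \<subseteq> U"
    proof (cases "C = {}")
      case True thus ?thesis using I0F by auto
    next
      case False
      then obtain C0 where C0: "C0 \<in> C" by auto
      have "\<Union>C \<in> F" unfolding F_def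
      proof (intro CollectI conjI)
        show "is_ideal (\<Union>C)" unfolding is_ideal_def
        proof (intro conjI ballI allI)
          show "0 \<in> \<Union>C" using C0 CF unfolding F_def is_ideal_def by auto
        next
          fix a y assume "y \<in> \<Union>C"
          then obtain Y where "Y \<in> C" "y \<in> Y" by auto
          thus "a * y \<in> \<Union>C" using CF unfolding F_def is_ideal_def by blast
        next
          fix y z assume "y \<in> \<Union>C" "z \<in> \<Union>C"
          then obtain Y Z where YZ: "Y \<in> C" "y \<in> Y" "Z \<in> C" "z \<in> Z" by auto
          from ch YZ have "Y \<subseteq> Z \<or> Z \<subseteq> Y" by auto
          thus "y + z \<in> \<Union>C"
          proof
            assume "Y \<subseteq> Z" thus ?thesis using YZ CF unfolding F_def is_ideal_def by blast
          next
            assume "Z \<subseteq> Y" thus ?thesis using YZ CF unfolding F_def is_ideal_def by blast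
          qed
        qed
        show "I0 \<subseteq> \<Union>C" using C0 CF unfolding F_def by auto
        show "1 \<notin> \<Union>C" using CF unfolding F_def by auto
      qed
      thus ?thesis by auto
    qed
  qed
  then obtain M where MF: "M \<in> F" and Mmax: "\<forall>X\<in>F. M \<subseteq> X \<longrightarrow> X = M" by auto
  have "maximal_ideal M" unfolding maximal_ideal_def
  proof (intro conjI allI impI)
    show "is_ideal M" using MF F_def by auto
    show "M \<noteq> UNIV" using MF F_def by auto
    fix J assume J: "is_ideal J \<and> M \<subseteq> J"
    show "J = M \<or> J = UNIV"
    proof (cases "1 \<in> J")
      case True
      hence "\<forall>a. a \<in> J" using J unfolding is_ideal_def by (metis mult.right_neutral)
      thus ?thesis by auto
    next
      case False
      hence "J \<in> F" using J MF unfolding F_def by auto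
      thus ?thesis using Mmax J by auto
    qed
  qed
  hence "M = m" using loc mm unfolding local_ring_def by auto
  moreover have "x \<in> I0" unfolding I0_def by (metis (mono_tags, lifting) CollectI mult_1)
  ultimately show False using MF x unfolding F_def by auto
qed


lemma pick_lessThan: "i < r \<Longrightarrow> pick {..<r} i = i"
proof -
  assume i: "i < r"
  have "{a \<in> {..<r}. a < i} = {..<i}" using i by auto
  hence "card {a \<in> {..<r}. a < i} = i" by simp
  thus ?thesis using pick_card_in_set[of i "{..<r}"] i by simp
qed

lemma minors_fun:
  fixes A :: "'a::comm_ring_1 mat"
  assumes A: "A \<in> carrier_mat r n"
    and hyp: "\<forall>J. J \<subseteq> {..<n} \<and> card J = r \<longrightarrow> det (submatrix A {..<r} J) = 0"
    and f: "\<forall>l<r. f l < n"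
  shows "det (mat r r (\<lambda>(i,l). A $$ (i, f l))) = 0"
proof (cases "inj_on f {..<r}")
  case False
  then obtain l1 l2 where l: "l1 < r" "l2 < r" "l1 \<noteq> l2" "f l1 = f l2"
    unfolding inj_on_def by auto
  show ?thesis
    by (rule det_identical_columns[of _ r l1 l2]) (use l in auto)
next
  case True
  define J where "J = f ` {..<r}"
  have cardJ: "card J = r" unfolding J_def using True card_image by fastforce
  have Jn: "J \<subseteq> {..<n}" unfolding J_def using f by auto
  have finJ: "finite J" unfolding J_def by auto
  define S where "S = submatrix A {..<r} J"
  have S: "S \<in> carrier_mat r r"
  proof -
    have h1: "{i. i < dim_row A \<and> i \<in> {..<r}} = {..<r}" using A by auto
    have h2: "{j. j < dim_col A \<and> j \<in> J} = J" using A Jn by auto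
    show ?thesis unfolding S_def carrier_mat_def dim_submatrix mem_Collect_eq
      by (simp only: h1 h2 cardJ card_lessThan simp_thms)
  qed
  have Sidx: "S $$ (i, l) = A $$ (i, pick J l)" if "i < r" "l < r" for i l
  proof -
    have "{i. i < dim_row A \<and> i \<in> {..<r}} = {..<r}" using A by auto
    moreover have "{j. j < dim_col A \<and> j \<in> J} = J" using A Jn by auto
    ultimately show ?thesis unfolding S_def using that cardJ
      by (subst submatrix_index) (auto simp: pick_lessThan)
  qed
  define p where "p l = (if l < r then card {a \<in> J. a < f l} else l)" for l
  have pf: "pick J (p l) = f l" if "l < r" for l
    using pick_card_in_set[of "f l" J] that unfolding p_def J_def by auto
  have plt: "p l < r" if "l < r" for l
  proof -
    have "{a \<in> J. a < f l} \<subset> J" using that unfolding J_def by auto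
    hence "card {a \<in> J. a < f l} < card J" using finJ by (simp add: psubset_card_mono)
    thus ?thesis unfolding p_def using that cardJ by simp
  qed
  have pinj: "inj_on p {..<r}"
  proof (rule inj_onI)
    fix x y assume "x \<in> {..<r}" "y \<in> {..<r}" "p x = p y"
    hence "f x = f y" using pf by (metis lessThan_iff)
    thus "x = y" using True \<open>x \<in> {..<r}\<close> \<open>y \<in> {..<r}\<close> unfolding inj_on_def by blast
  qed
  have "p ` {..<r} = {..<r}"
    by (rule endo_inj_surj) (use plt pinj in auto)
  hence "bij_betw p {0..<r} {0..<r}" using pinj unfolding bij_betw_def by (simp add: lessThan_atLeast0)
  hence pperm: "p permutes {0..<r}"
    by (rule bij_imp_permutes) (auto simp: p_def)
  have eq: "mat r r (\<lambda>(i,l). A $$ (i, f l)) = transpose_mat (mat r r (\<lambda>(i,j). (transpose_mat S) $$ (p i, j)))"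
    by (rule eq_matI) (use S plt in \<open>auto simp: Sidx pf\<close>)
  have "det (mat r r (\<lambda>(i,l). A $$ (i, f l))) = det (mat r r (\<lambda>(i,j). (transpose_mat S) $$ (p i, j)))"
    unfolding eq by (rule det_transpose[where n=r]) simp
  also have "\<dots> = signof p * det (transpose_mat S)"
    by (rule det_permute_rows[OF _ pperm]) (use S in simp)
  also have "det (transpose_mat S) = det S" using det_transpose[OF S] by simp
  also have "det S = 0" using hyp Jn cardJ unfolding S_def by auto
  finally show ?thesis by simp
qed


lemma unit_minor:
  fixes m :: "'a::comm_ring_1 set" and a :: "nat \<Rightarrow> nat \<Rightarrow> 'a"
  assumes loc: "local_ring TYPE('a)" and mm: "maximal_ideal m"
  shows "(\<forall>c. (\<forall>j<N. (\<Sum>i<p. c i * a i j) \<in> m) \<longrightarrow> (\<forall>i<p. c i \<in> m))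
     \<Longrightarrow> \<exists>f. (\<forall>l<p. f l < N) \<and> det (mat p p (\<lambda>(i,l). a i (f l))) \<notin> m"
proof (induction p arbitrary: a)
  case 0
  have "det (mat 0 0 (\<lambda>(i,l). a i (f l))) = 1" for f by (rule det_dim_zero) simp
  thus ?case using mi_one[OF mm] by auto
next
  case (Suc p)
  note ind = Suc.prems
  have "\<exists>j0<N. a p j0 \<notin> m"
  proof (rule ccontr)
    assume "\<not> (\<exists>j0<N. a p j0 \<notin> m)"
    hence all: "\<forall>j<N. a p j \<in> m" by auto
    define c where "c i = (if i = p then (1::'a) else 0)" for i
    have "(\<Sum>i<Suc p. c i * a i j) = a p j" for j
      unfolding c_def by (simp add: if_distrib cong: if_cong)
    hence "\<forall>i<Suc p. c i \<in> m" using ind all by auto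
    hence "c p \<in> m" by auto
    thus False using mi_one[OF mm] unfolding c_def by simp
  qed
  then obtain j0 where j0: "j0 < N" "a p j0 \<notin> m" by auto
  define u where "u = a p j0"
  obtain u' where uu': "u * u' = 1" using local_unit[OF loc mm] j0 unfolding u_def by auto
  define a' where "a' i j = a i j - a i j0 * u' * a p j" for i j
  have ind': "\<forall>c. (\<forall>j<N. (\<Sum>i<p. c i * a' i j) \<in> m) \<longrightarrow> (\<forall>i<p. c i \<in> m)"
  proof (rule allI, rule impI)
    fix c assume h: "\<forall>j<N. (\<Sum>i<p. c i * a' i j) \<in> m"
    define c' where "c' i = (if i < p then c i else - (\<Sum>i<p. c i * a i j0) * u')" for i
    have "(\<Sum>i<Suc p. c' i * a i j) = (\<Sum>i<p. c i * a' i j)" for j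
    proof -
      have "(\<Sum>i<Suc p. c' i * a i j) = (\<Sum>i<p. c i * a i j) - (\<Sum>i<p. c i * a i j0) * u' * a p j"
        unfolding c'_def by simp
      also have "\<dots> = (\<Sum>i<p. c i * a' i j)"
        unfolding a'_def by (simp add: right_diff_distrib sum_subtractf sum_distrib_right mult.assoc)
      finally show ?thesis .
    qed
    hence "\<forall>i<Suc p. c' i \<in> m" using ind h by auto
    show "\<forall>i<p. c i \<in> m"
    proof (intro allI impI)
      fix i assume "i < p"
      hence "c' i \<in> m" using \<open>\<forall>i<Suc p. c' i \<in> m\<close> by auto
      thus "c i \<in> m" using \<open>i < p\<close> unfolding c'_def by simp
    qed
  qed
  from Suc.IH[OF ind'] obtain f where f: "\<forall>l<p. f l < N" and D: "det (mat p p (\<lambda>(i,l). a' i (f l))) \<notin> m"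
    by auto
  define f' where "f' = f(p := j0)"
  have f': "\<forall>l<Suc p. f' l < N" using f j0 unfolding f'_def by (auto simp: less_Suc_eq)
  define M where "M = mat (Suc p) (Suc p) (\<lambda>(i,l). a i (f' l))"
  define P where "P = mat (Suc p) (Suc p) (\<lambda>(i,l). if i = l then 1 else if l = p then - (a i j0 * u') else (0::'a))"
  define M2 where "M2 = mat (Suc p) (Suc p) (\<lambda>(i,l). if i < p then a' i (f' l) else a p (f' l))"
  have PM: "P * M = M2"
  proof (rule eq_matI)
    fix i l assume il: "i < dim_row M2" "l < dim_col M2"
    hence il': "i < Suc p" "l < Suc p" unfolding M2_def by auto
    have "(P * M) $$ (i,l) = (\<Sum>k\<in>{0..<Suc p}. P $$ (i,k) * M $$ (k,l))"
      using il' unfolding P_def M_def by (simp add: scalar_prod_def)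
    also have "\<dots> = (\<Sum>k<p. P $$ (i,k) * M $$ (k,l)) + P $$ (i,p) * M $$ (p,l)"
      by (simp add: atLeast0LessThan)
    also have "\<dots> = M2 $$ (i,l)"
    proof (cases "i < p")
      case True
      have "(\<Sum>k<p. P $$ (i,k) * M $$ (k,l)) = (\<Sum>k<p. if k = i then M $$ (i,l) else 0)"
        by (rule sum.cong) (use True in \<open>auto simp: P_def\<close>)
      also have "\<dots> = M $$ (i,l)" using True by simp
      finally show ?thesis using True il' unfolding P_def M_def M2_def a'_def
        by (simp add: mult.assoc)
    next
      case False
      hence ip: "i = p" using il' by auto
      have "(\<Sum>k<p. P $$ (i,k) * M $$ (k,l)) = 0"
        by (rule sum.neutral) (use ip in \<open>auto simp: P_def\<close>)
      thus ?thesis using ip il' unfolding P_def M_def M2_def by simp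
    qed
    finally show "(P * M) $$ (i,l) = M2 $$ (i,l)" .
  qed (auto simp: P_def M2_def M_def)
  have detP: "det P = 1"
  proof -
    have "upper_triangular P" unfolding upper_triangular_def P_def by auto
    hence "det P = prod_list (diag_mat P)"
      by (rule det_upper_triangular[where n="Suc p"]) (simp add: P_def)
    also have "diag_mat P = map (\<lambda>_. 1) [0..<Suc p]"
      unfolding diag_mat_def P_def by simp
    also have "prod_list \<dots> = 1" by (induction p) auto
    finally show ?thesis .
  qed
  have "det M2 = det P * det M"
    unfolding PM[symmetric] by (rule det_mult) (auto simp: P_def M_def)
  hence detM: "det M = det M2" using detP by simp
  have "det M2 = (\<Sum>i<Suc p. M2 $$ (i,p) * cofactor M2 i p)"
    by (rule laplace_expansion_column) (auto simp: M2_def)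
  also have "\<dots> = (\<Sum>i<p. M2 $$ (i,p) * cofactor M2 i p) + M2 $$ (p,p) * cofactor M2 p p" by simp
  also have "(\<Sum>i<p. M2 $$ (i,p) * cofactor M2 i p) = 0"
    by (rule sum.neutral) (auto simp: M2_def a'_def f'_def u_def[symmetric] mult.assoc uu' mult.commute[of u'])
  also have "M2 $$ (p,p) = u" unfolding M2_def f'_def u_def by simp
  also have "cofactor M2 p p = det (mat p p (\<lambda>(i,l). a' i (f l)))"
  proof -
    have "mat_delete M2 p p = mat p p (\<lambda>(i,l). a' i (f l))"
      by (rule eq_matI) (auto simp: mat_delete_def M2_def f'_def)
    moreover have "(-1::'a)^(p+p) = 1" by (simp add: mult_2[symmetric])
    ultimately show ?thesis unfolding cofactor_def by simp
  qed
  finally have dMu: "det M = u * det (mat p p (\<lambda>(i,l). a' i (f l)))" using detM by simp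
  moreover have "det M \<notin> m"
  proof
    assume "det M \<in> m"
    hence "u' * det M \<in> m" by (rule mi_mult[OF mm])
    hence "det (mat p p (\<lambda>(i,l). a' i (f l))) \<in> m"
      using dMu uu' by (simp add: mult.assoc[symmetric] mult.commute[of u'])
    thus False using D by simp
  qed
  thus ?case using f' unfolding M_def by blast
qed


lemma LK:
  fixes A :: "'a::comm_ring_1 mat"
  assumes A: "A \<in> carrier_mat r n" and v: "v \<in> carrier_vec r"
  shows "v \<in> left_kernel A \<longleftrightarrow> (\<forall>j<n. (\<Sum>i<r. A $$ (i,j) * v $ i) = 0)"
proof -
  have "(transpose_mat A *\<^sub>v v) $ j = (\<Sum>i<r. A $$ (i,j) * v $ i)" if "j < n" for j
    using A v that by (simp add: scalar_prod_def atLeast0LessThan)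
  moreover have "transpose_mat A *\<^sub>v v = 0\<^sub>v n \<longleftrightarrow> (\<forall>j<n. (transpose_mat A *\<^sub>v v) $ j = 0)"
    using A by (auto simp: vec_eq_iff)
  ultimately show ?thesis unfolding left_kernel_def using A v by auto
qed

theorem lemma4p2p2:
  fixes A :: "'a::comm_ring_1 mat" and m :: "'a set" and r n :: nat
  assumes "local_ring TYPE('a)"
    and "maximal_ideal m"
    and "r \<le> n"
    and "A \<in> carrier_mat r n"
    and "\<forall>J. J \<subseteq> {..<n} \<and> card J = r \<longrightarrow> det (submatrix A {..<r} J) = 0"
    and "corank_mod m A = 1"
  shows "free_rank_one (left_kernel A)"
proof -
  note loc = assms(1) and mm = assms(2) and A = assms(4) and hyp = assms(5)
  have dr: "dim_row A = r" and dc: "dim_col A = n" using A by auto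
  have rk: "r - rank_mod m A = 1" using assms(6) unfolding corank_mod_def dr .
  define T where "T = {card S | S. S \<subseteq> {..<r} \<and> rows_indep_mod m A S}"
  have "T \<subseteq> card ` Pow {..<r}" unfolding T_def by auto
  hence finT: "finite T" by (rule finite_subset) simp
  have "0 \<in> T" unfolding T_def rows_indep_mod_def
    by (rule CollectI, rule exI[of _ "{}"]) simp
  hence "Max T \<in> T" using finT Max_in by auto
  then obtain S where S: "S \<subseteq> {..<r}" "rows_indep_mod m A S" "card S = rank_mod m A"
    unfolding T_def rank_mod_def dr by auto
  define p where "p = r - 1"
  have rp: "r = Suc p" using rk unfolding p_def by auto
  have cS: "card S = p" using rk S(3) unfolding p_def by auto
  have "card ({..<r} - S) = 1" using S(1) cS rp by (simp add: card_Diff_subset finite_subset)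
  then obtain k where k: "{..<r} - S = {k}" by (rule card_1_singletonE)
  have kr: "k < r" and Sk: "S = {0..<Suc p} - {k}" using k S(1) rp by auto
  define a where "a i j = A $$ (insert_index k i, j)" for i j
  have ins_img: "insert_index k ` {..<p} = S"
    using insert_index_image[of k p] kr rp Sk by (simp add: lessThan_atLeast0)
  have ins_inj: "inj_on (insert_index k) X" for X by (rule insert_index_inj_on)
  have indep: "\<forall>c. (\<forall>j<n. (\<Sum>i<p. c i * a i j) \<in> m) \<longrightarrow> (\<forall>i<p. c i \<in> m)"
  proof (rule allI, rule impI)
    fix c assume h: "\<forall>j<n. (\<Sum>i<p. c i * a i j) \<in> m"
    define c' where "c' s = c (delete_index k s)" for s
    have "(\<Sum>s\<in>S. c' s * A $$ (s,j)) = (\<Sum>i<p. c i * a i j)" for j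
      unfolding ins_img[symmetric] by (subst sum.reindex[OF ins_inj]) (simp add: c'_def a_def)
    hence "\<forall>s\<in>S. c' s \<in> m" using S(2) h unfolding rows_indep_mod_def dc by auto
    thus "\<forall>i<p. c i \<in> m" using ins_img unfolding c'_def by force
  qed
  obtain f where f: "\<forall>l<p. f l < n" and D: "det (mat p p (\<lambda>(i,l). a i (f l))) \<notin> m"
    using unit_minor[OF loc mm indep] by blast
  define N where "N = mat p p (\<lambda>(i,l). a i (f l))"
  define Dt where "Dt = det N"
  obtain Di where Di: "Dt * Di = 1" using local_unit[OF loc mm] D unfolding Dt_def N_def by auto
  define Cm where "Cm j = mat r r (\<lambda>(i,l). A $$ (i, if l < p then f l else j))" for j
  define w where "w = vec r (\<lambda>i. cofactor (Cm 0) i p)"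
  have cof: "cofactor (Cm j) i p = cofactor (Cm 0) i p" for i j
  proof -
    have "mat_delete (Cm j) i p = mat_delete (Cm 0) i p"
      by (rule eq_matI) (auto simp: mat_delete_def Cm_def rp)
    thus ?thesis unfolding cofactor_def by simp
  qed
  have wcar: "w \<in> carrier_vec r" unfolding w_def by simp
  have wK: "w \<in> left_kernel A"
    unfolding LK[OF A wcar]
  proof (intro allI impI)
    fix j assume j: "j < n"
    have "det (Cm j) = (\<Sum>i<r. Cm j $$ (i,p) * cofactor (Cm j) i p)"
      by (rule laplace_expansion_column) (auto simp: Cm_def rp)
    also have "\<dots> = (\<Sum>i<r. A $$ (i,j) * w $ i)"
    proof (rule sum.cong[OF refl])
      fix i assume "i \<in> {..<r}"
      hence "Cm j $$ (i,p) = A $$ (i,j)" unfolding Cm_def rp by simp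
      thus "Cm j $$ (i,p) * cofactor (Cm j) i p = A $$ (i,j) * w $ i"
        using \<open>i \<in> {..<r}\<close> unfolding w_def cof[of j] by simp
    qed
    finally have "(\<Sum>i<r. A $$ (i,j) * w $ i) = det (Cm j)" by simp
    also have "det (Cm j) = 0" unfolding Cm_def
      by (rule minors_fun[OF A hyp]) (use f j in \<open>auto simp: rp\<close>)
    finally show "(\<Sum>i<r. A $$ (i,j) * w $ i) = 0" .
  qed
  have wk: "w $ k = (-1)^(k+p) * Dt"
  proof -
    have "mat_delete (Cm 0) k p = N"
      by (rule eq_matI) (auto simp: mat_delete_def Cm_def N_def a_def insert_index_def rp)
    thus ?thesis unfolding w_def cofactor_def Dt_def using kr by simp
  qed
  define e where "e = (-1)^(k+p) * Di"
  have we: "w $ k * e = 1" unfolding wk e_def using Di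
    by (simp add: mult.assoc mult.left_commute[of Dt] power_mult_distrib[symmetric])
  show ?thesis unfolding free_rank_one_def
  proof (rule bexI[OF _ wK], intro ballI)
    fix v assume vK: "v \<in> left_kernel A"
    hence vcar: "v \<in> carrier_vec r" unfolding left_kernel_def dr by auto
    define c where "c = v $ k * e"
    define u where "u i = v $ i - c * w $ i" for i
    have uk: "u k = 0" unfolding u_def c_def using we by (simp add: mult.assoc mult.commute[of e])
    have usum: "(\<Sum>i<r. A $$ (i,j) * u i) = 0" if "j < n" for j
    proof -
      have "(\<Sum>i<r. A $$ (i,j) * u i) = (\<Sum>i<r. A $$ (i,j) * v $ i) - c * (\<Sum>i<r. A $$ (i,j) * w $ i)"
        unfolding u_def by (simp add: right_diff_distrib sum_subtractf sum_distrib_left mult.left_commute)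
      thus ?thesis using vK wK that unfolding LK[OF A vcar] LK[OF A wcar] by simp
    qed
    define x where "x i = u (insert_index k i)" for i
    have xN: "(\<Sum>i<p. x i * N $$ (i,l)) = 0" if l: "l < p" for l
    proof -
      have "{..<r} = insert k (insert_index k ` {..<p})" using ins_img Sk kr rp by auto
      hence "(\<Sum>i<r. A $$ (i, f l) * u i) = A $$ (k, f l) * u k + (\<Sum>i\<in>insert_index k ` {..<p}. A $$ (i, f l) * u i)"
        by (simp only:, subst sum.insert) (auto simp: insert_index_exclude[symmetric])
      also have "(\<Sum>i\<in>insert_index k ` {..<p}. A $$ (i, f l) * u i) = (\<Sum>i<p. x i * N $$ (i,l))"
        by (subst sum.reindex[OF ins_inj]) (rule sum.cong, use l in \<open>auto simp: x_def N_def a_def\<close>)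
      finally show ?thesis using usum[of "f l"] f l uk by simp
    qed
    have x0: "x i0 = 0" if i0: "i0 < p" for i0
    proof -
      have NN: "N \<in> carrier_mat p p" unfolding N_def by simp
      have "(\<Sum>i<p. x i * (N * adj_mat N) $$ (i,i0)) = (\<Sum>i<p. x i * (Dt \<cdot>\<^sub>m 1\<^sub>m p) $$ (i,i0))"
        using adj_mat(2)[OF NN] Dt_def by simp
      also have "\<dots> = Dt * x i0" using i0
        by (simp add: if_distrib cong: if_cong) 
      finally have 1: "Dt * x i0 = (\<Sum>i<p. x i * (N * adj_mat N) $$ (i,i0))" by simp
      have "(\<Sum>i<p. x i * (N * adj_mat N) $$ (i,i0)) = (\<Sum>i<p. x i * (\<Sum>l<p. N $$ (i,l) * adj_mat N $$ (l,i0)))"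
        using adj_mat(1)[OF NN] NN i0 by (intro sum.cong) (auto simp: scalar_prod_def atLeast0LessThan)
      also have "\<dots> = (\<Sum>l<p. (\<Sum>i<p. x i * N $$ (i,l)) * adj_mat N $$ (l,i0))"
        by (simp add: sum_distrib_left sum_distrib_right mult.assoc) (rule sum.swap)
      also have "\<dots> = 0" using xN by simp
      finally have "Dt * x i0 = 0" using 1 by simp
      hence "Di * (Dt * x i0) = 0" by simp
      thus ?thesis using Di by (simp add: mult.assoc[symmetric] mult.commute[of Di])
    qed
    have vcw: "v = c \<cdot>\<^sub>v w"
    proof (rule eq_vecI)
      show "dim_vec v = dim_vec (c \<cdot>\<^sub>v w)" using vcar wcar by simp
      fix i assume "i < dim_vec (c \<cdot>\<^sub>v w)"
      hence i: "i < r" using wcar by simp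
      have "u i = 0"
      proof (cases "i = k")
        case True thus ?thesis using uk by simp
      next
        case False
        hence "i = insert_index k (delete_index k i)" by (simp add: insert_delete_index)
        moreover have "delete_index k i < p" using False i rp kr unfolding delete_index_def by auto
        ultimately show ?thesis using x0 unfolding x_def by metis
      qed
      thus "v $ i = (c \<cdot>\<^sub>v w) $ i" using i wcar unfolding u_def by simp
    qed
    show "\<exists>!c. v = c \<cdot>\<^sub>v w"
    proof (rule ex1I[of _ c])
      show "v = c \<cdot>\<^sub>v w" by (rule vcw)
      fix c2 assume "v = c2 \<cdot>\<^sub>v w"
      hence "c2 * w $ k = c * w $ k" using vcw kr wcar by (metis index_smult_vec(1) carrier_vecD)
      hence "c2 * w $ k * e = c * w $ k * e" by simp
      thus "c2 = c" using we by (simp add: mult.assoc mult.commute[of e])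
    qed
  qed
qed

end
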